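(* For every integer $n>1$ and every admissible total-degree monomial ordering on $R_n$, the set $G_n$ is the reduced Gröbner basis of the ideal $(G_n)$.
   Context: Let $R_n=\mathbb{F}_2[x_1,\ldots,x_n,y_1,\ldots,y_n,z_1,\ldots,z_n]$ with $\mathbb{F}_2=\mathbb{Z}/(2)$. For $S\subseteq R_n$, $(S)$ denotes the ideal generated by $S$. A total-degree ordering is an admissible monomial ordering that first compares total degrees. Define $S_n=\{c^2-c : c\in\{x_1,\ldots,x_n,y_1,\ldots,y_n,z_1,\ldots,z_n\}\}$, $L_n=\{x_iy_i+x_i+y_i-z_i : i=1,\ldots,n\}$, $T_n=\{x_iz_i-x_i : i=1,\ldots,n\}\cup\{y_iz_i-y_i : i=1,\ldots,n\}$, $P_n=\{\prod_{i=1}^n c_i : c_i\in\{x_i,y_i,z_i\}\text{ for each } i\}$, $G_n=S_n\cup L_n\cup T_n\cup P_n$. *)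

theory Defs
  imports "HOL-Library.Poly_Mapping" "HOL-Library.Z2"
begin

datatype var = X nat | Y nat | Z nat

type_synonym mon = "var \<Rightarrow>\<^sub>0 nat"
type_synonym pol = "mon \<Rightarrow>\<^sub>0 bit"

definition vars :: "nat \<Rightarrow> var set" where
  "vars n = {X i | i. 1 \<le> i \<and> i \<le> n} \<union> {Y i | i. 1 \<le> i \<and> i \<le> n} \<union> {Z i | i. 1 \<le> i \<and> i \<le> n}"

definition mons :: "nat \<Rightarrow> mon set" where
  "mons n = {m. Poly_Mapping.keys m \<subseteq> vars n}"

definition R :: "nat \<Rightarrow> pol set" where
  "R n = {p. Poly_Mapping.keys p \<subseteq> mons n}"

definition Var :: "var \<Rightarrow> pol" where
  "Var v = Poly_Mapping.single (Poly_Mapping.single v 1) 1"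

definition tdeg :: "mon \<Rightarrow> nat" where
  "tdeg m = (\<Sum>v\<in>Poly_Mapping.keys m. Poly_Mapping.lookup m v)"

definition mdvd :: "mon \<Rightarrow> mon \<Rightarrow> bool" where
  "mdvd a b \<longleftrightarrow> (\<forall>v. Poly_Mapping.lookup a v \<le> Poly_Mapping.lookup b v)"

definition ideal_gen :: "nat \<Rightarrow> pol set \<Rightarrow> pol set" where
  "ideal_gen n S = {p. \<exists>F q. finite F \<and> F \<subseteq> S \<and> (\<forall>g\<in>F. q g \<in> R n) \<and> p = (\<Sum>g\<in>F. q g * g)}"

section \<open>Monomial orderings (ord a b means a \<preceq> b)\<close>

definition admissible :: "nat \<Rightarrow> (mon \<Rightarrow> mon \<Rightarrow> bool) \<Rightarrow> bool" where
  "admissible n ord \<longleftrightarrow>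
     (\<forall>a\<in>mons n. ord a a) \<and>
     (\<forall>a\<in>mons n. \<forall>b\<in>mons n. ord a b \<and> ord b a \<longrightarrow> a = b) \<and>
     (\<forall>a\<in>mons n. \<forall>b\<in>mons n. \<forall>c\<in>mons n. ord a b \<and> ord b c \<longrightarrow> ord a c) \<and>
     (\<forall>a\<in>mons n. \<forall>b\<in>mons n. ord a b \<or> ord b a) \<and>
     (\<forall>a\<in>mons n. ord 0 a) \<and>
     (\<forall>a\<in>mons n. \<forall>b\<in>mons n. \<forall>c\<in>mons n. ord a b \<longrightarrow> ord (a + c) (b + c))"

definition total_degree :: "nat \<Rightarrow> (mon \<Rightarrow> mon \<Rightarrow> bool) \<Rightarrow> bool" where
  "total_degree n ord \<longleftrightarrow> (\<forall>a\<in>mons n. \<forall>b\<in>mons n. tdeg a < tdeg b \<longrightarrow> ord a b)"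

definition lm :: "(mon \<Rightarrow> mon \<Rightarrow> bool) \<Rightarrow> pol \<Rightarrow> mon" where
  "lm ord p = (THE m. m \<in> Poly_Mapping.keys p \<and> (\<forall>m'\<in>Poly_Mapping.keys p. ord m' m))"

definition lc :: "(mon \<Rightarrow> mon \<Rightarrow> bool) \<Rightarrow> pol \<Rightarrow> bit" where
  "lc ord p = Poly_Mapping.lookup p (lm ord p)"

definition groebner_basis :: "nat \<Rightarrow> (mon \<Rightarrow> mon \<Rightarrow> bool) \<Rightarrow> pol set \<Rightarrow> pol set \<Rightarrow> bool" where
  "groebner_basis n ord G I \<longleftrightarrow>
     finite G \<and> G \<subseteq> I \<and>
     (\<forall>f\<in>I. f \<noteq> 0 \<longrightarrow> (\<exists>g\<in>G. g \<noteq> 0 \<and> mdvd (lm ord g) (lm ord f)))"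

definition reduced_groebner_basis :: "nat \<Rightarrow> (mon \<Rightarrow> mon \<Rightarrow> bool) \<Rightarrow> pol set \<Rightarrow> pol set \<Rightarrow> bool" where
  "reduced_groebner_basis n ord G I \<longleftrightarrow>
     groebner_basis n ord G I \<and>
     (\<forall>g\<in>G. g \<noteq> 0 \<and> lc ord g = 1) \<and>
     (\<forall>g\<in>G. \<forall>g'\<in>G. g' \<noteq> g \<longrightarrow> (\<forall>m\<in>Poly_Mapping.keys g. \<not> mdvd (lm ord g') m))"

definition S_set :: "nat \<Rightarrow> pol set" where
  "S_set n = {Var v ^ 2 - Var v | v. v \<in> vars n}"

definition L_set :: "nat \<Rightarrow> pol set" where
  "L_set n = {Var (X i) * Var (Y i) + Var (X i) + Var (Y i) - Var (Z i) | i. 1 \<le> i \<and> i \<le> n}"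

definition T_set :: "nat \<Rightarrow> pol set" where
  "T_set n = {Var (X i) * Var (Z i) - Var (X i) | i. 1 \<le> i \<and> i \<le> n}
           \<union> {Var (Y i) * Var (Z i) - Var (Y i) | i. 1 \<le> i \<and> i \<le> n}"

definition P_set :: "nat \<Rightarrow> pol set" where
  "P_set n = {(\<Prod>i\<in>{1..n}. Var (c i)) | c. \<forall>i\<in>{1..n}. c i \<in> {X i, Y i, Z i}}"

definition G_set :: "nat \<Rightarrow> pol set" where
  "G_set n = S_set n \<union> L_set n \<union> T_set n \<union> P_set n"

end

theory Submission
  imports Defs "HOL-Library.FuncSet"
begin


abbreviation e :: "var \<Rightarrow> mon" where "e v \<equiv> Poly_Mapping.single v 1"

lemma bit_add_self[simp]: "(a::bit) + a = 0" by (cases a) simp_all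
lemma bit_minus_eq_plus: "(a::bit) - b = a + b" by (cases a; cases b) simp_all

lemma pol_minus: "(p::pol) - q = p + q"
  by (rule poly_mapping_eqI) (simp add: lookup_minus lookup_add bit_minus_eq_plus)

lemma Var_mult: "Var a * Var b = Poly_Mapping.single (e a + e b) 1"
  by (simp add: Var_def mult_single)

lemma single_mult1: "Poly_Mapping.single m (1::bit) * Poly_Mapping.single m' 1 = Poly_Mapping.single (m+m') 1"
  by (simp add: mult_single)

definition Lam :: "(mon \<Rightarrow> bit) \<Rightarrow> pol \<Rightarrow> bit" where
 "Lam l p = (\<Sum>m\<in>Poly_Mapping.keys p. Poly_Mapping.lookup p m * l m)"

lemma Lam_add: "Lam l (p + q) = Lam l p + Lam l q"
  unfolding Lam_def by (rule setsum_keys_plus_distrib) (simp, rule distrib_right)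

lemma Lam_zero[simp]: "Lam l 0 = 0" by (simp add: Lam_def)

lemma Lam_single: "Lam l (Poly_Mapping.single m c) = c * l m"
  by (simp add: Lam_def)

lemma Lam_sum: "Lam l (sum f A) = (\<Sum>a\<in>A. Lam l (f a))"
  by (induction A rule: infinite_finite_induct) (simp_all add: Lam_add)

lemma bit_cases01: "(b::bit) = 0 \<or> b = 1" by (cases b) simp_all

lemma pol_expand: "(p::pol) = (\<Sum>m\<in>Poly_Mapping.keys p. Poly_Mapping.single m 1)"
proof (rule poly_mapping_eqI)
  fix k
  have "(\<Sum>m\<in>Poly_Mapping.keys p. Poly_Mapping.lookup (Poly_Mapping.single m (1::bit)) k)
      = (\<Sum>m\<in>Poly_Mapping.keys p. (if m = k then 1 else 0))"
    by (rule sum.cong) (auto simp: lookup_single)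
  also have "\<dots> = (if k \<in> Poly_Mapping.keys p then 1 else 0)"
    by (simp add: sum.delta')
  also have "\<dots> = Poly_Mapping.lookup p k"
    using bit_cases01[of "Poly_Mapping.lookup p k"] by (auto simp: in_keys_iff)
  finally show "Poly_Mapping.lookup p k = Poly_Mapping.lookup (\<Sum>m\<in>Poly_Mapping.keys p. Poly_Mapping.single m 1) k"
    by (simp add: lookup_sum)
qed

lemma Lam_mult:
  assumes "\<And>m. Lam l (Poly_Mapping.single m 1 * g) = 0"
  shows "Lam l (q * g) = 0"
proof -
  have "q * g = (\<Sum>m\<in>Poly_Mapping.keys q. Poly_Mapping.single m 1 * g)"
    by (subst pol_expand[of q]) (simp add: sum_distrib_right)
  then show ?thesis by (simp add: Lam_sum assms)
qed

lemma Lam_ideal: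
  assumes "\<And>g m. g \<in> G \<Longrightarrow> Lam l (Poly_Mapping.single m 1 * g) = 0"
    and "f \<in> ideal_gen n G"
  shows "Lam l f = 0"
  using assms(2) unfolding ideal_gen_def
  by (auto simp: Lam_sum intro!: sum.neutral Lam_mult assms(1))

lemma tdeg_add: "tdeg (a + b) = tdeg a + tdeg b"
  unfolding tdeg_def by (rule setsum_keys_plus_distrib) simp_all

lemma tdeg_zero[simp]: "tdeg 0 = 0" by (simp add: tdeg_def)
lemma tdeg_single[simp]: "tdeg (Poly_Mapping.single v k) = k" by (simp add: tdeg_def)
lemma tdeg_sum: "tdeg (sum f A) = (\<Sum>a\<in>A. tdeg (f a))"
  by (induction A rule: infinite_finite_induct) (simp_all add: tdeg_add)

lemma tdeg_superset: "finite K \<Longrightarrow> Poly_Mapping.keys m \<subseteq> K \<Longrightarrow> tdeg m = (\<Sum>v\<in>K. Poly_Mapping.lookup m v)"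
  unfolding tdeg_def by (rule sum.mono_neutral_left) (auto simp: in_keys_iff)

lemma mdvd_tdeg: "mdvd a b \<Longrightarrow> tdeg a \<le> tdeg b"
proof -
  assume "mdvd a b"
  let ?K = "Poly_Mapping.keys a \<union> Poly_Mapping.keys b"
  have "tdeg a = (\<Sum>v\<in>?K. Poly_Mapping.lookup a v)" by (rule tdeg_superset) auto
  also have "\<dots> \<le> (\<Sum>v\<in>?K. Poly_Mapping.lookup b v)" using \<open>mdvd a b\<close> by (intro sum_mono) (simp add: mdvd_def)
  also have "\<dots> = tdeg b" by (rule tdeg_superset[symmetric]) auto
  finally show ?thesis .
qed

lemma mdvd_tdeg_eq: "mdvd a b \<Longrightarrow> tdeg a = tdeg b \<Longrightarrow> a = b"
proof (rule ccontr)
  assume d: "mdvd a b" and t: "tdeg a = tdeg b" and ne: "a \<noteq> b"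
  then obtain v where v: "Poly_Mapping.lookup a v \<noteq> Poly_Mapping.lookup b v" by (meson poly_mapping_eqI)
  let ?K = "Poly_Mapping.keys a \<union> Poly_Mapping.keys b \<union> {v}"
  have "tdeg a = (\<Sum>v\<in>?K. Poly_Mapping.lookup a v)" by (rule tdeg_superset) auto
  also have "\<dots> < (\<Sum>v\<in>?K. Poly_Mapping.lookup b v)"
    using d v by (intro sum_strict_mono_ex1) (auto simp: mdvd_def le_neq_implies_less)
  also have "\<dots> = tdeg b" by (rule tdeg_superset[symmetric]) auto
  finally show False using t by simp
qed



fun idx :: "var \<Rightarrow> nat" where "idx (X i) = i" | "idx (Y i) = i" | "idx (Z i) = i"

definition valid :: "nat \<Rightarrow> (nat \<Rightarrow> var) \<Rightarrow> bool" where
  "valid n c \<longleftrightarrow> (\<forall>i\<in>{1..n}. c i \<in> {X i, Y i, Z i})"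

definition M :: "nat \<Rightarrow> (nat \<Rightarrow> var) \<Rightarrow> mon" where
  "M n c = (\<Sum>i\<in>{1..n}. e (c i))"

lemma valid_idx: assumes "valid n c" "j \<in> {1..n}" shows "idx (c j) = j"
proof -
  have "c j \<in> {X j, Y j, Z j}" using assms unfolding valid_def by blast
  then show ?thesis by auto
qed

lemma lookup_M: assumes "valid n c"
  shows "Poly_Mapping.lookup (M n c) v = (if \<exists>i\<in>{1..n}. c i = v then 1 else 0)"
proof (cases "\<exists>i\<in>{1..n}. c i = v")
  case True
  then obtain i where i: "i \<in> {1..n}" "c i = v" by blast
  have "Poly_Mapping.lookup (M n c) v = (\<Sum>j\<in>{1..n}. (if c j = v then 1::nat else 0))"
    unfolding M_def lookup_sum by (intro sum.cong) (auto simp: lookup_single when_def)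
  also have "\<dots> = (\<Sum>j\<in>{1..n}. (if j = i then 1::nat else 0))"
    using valid_idx[OF assms] i by (intro sum.cong) (auto, metis atLeastAtMost_iff)
  also have "\<dots> = 1" using i by simp
  finally show ?thesis using True by simp
next
  case False
  then show ?thesis unfolding M_def by (auto simp: lookup_sum lookup_single when_def)
qed

definition gS :: "var \<Rightarrow> pol" where "gS v = Var v ^ 2 - Var v"
definition gL :: "nat \<Rightarrow> pol" where "gL i = Var (X i) * Var (Y i) + Var (X i) + Var (Y i) - Var (Z i)"
definition gTX :: "nat \<Rightarrow> pol" where "gTX i = Var (X i) * Var (Z i) - Var (X i)"
definition gTY :: "nat \<Rightarrow> pol" where "gTY i = Var (Y i) * Var (Z i) - Var (Y i)"
definition gP :: "nat \<Rightarrow> (nat \<Rightarrow> var) \<Rightarrow> pol" where "gP n c = (\<Prod>i\<in>{1..n}. Var (c i))"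

lemma gS_nf: "gS v = Poly_Mapping.single (e v + e v) 1 + Poly_Mapping.single (e v) 1"
  by (simp add: gS_def power2_eq_square Var_mult pol_minus) (simp add: Var_def)
lemma gL_nf: "gL i = Poly_Mapping.single (e (X i) + e (Y i)) 1 + Poly_Mapping.single (e (X i)) 1
   + Poly_Mapping.single (e (Y i)) 1 + Poly_Mapping.single (e (Z i)) 1"
  by (simp add: gL_def Var_mult pol_minus) (simp add: Var_def)
lemma gTX_nf: "gTX i = Poly_Mapping.single (e (X i) + e (Z i)) 1 + Poly_Mapping.single (e (X i)) 1"
  by (simp add: gTX_def Var_mult pol_minus) (simp add: Var_def)
lemma gTY_nf: "gTY i = Poly_Mapping.single (e (Y i) + e (Z i)) 1 + Poly_Mapping.single (e (Y i)) 1"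
  by (simp add: gTY_def Var_mult pol_minus) (simp add: Var_def)
lemma prod_Var: "(\<Prod>i\<in>A. Var (c i)) = Poly_Mapping.single (\<Sum>i\<in>A. e (c i)) 1"
  by (induction A rule: infinite_finite_induct) (simp_all add: Var_def mult_single)
lemma gP_nf: "gP n c = Poly_Mapping.single (M n c) 1"
  by (simp add: gP_def M_def prod_Var)


lemma S_eq: "S_set n = gS ` vars n" unfolding S_set_def gS_def by blast
lemma L_eq: "L_set n = gL ` {1..n}" unfolding L_set_def gL_def by auto
lemma T_eq: "T_set n = gTX ` {1..n} \<union> gTY ` {1..n}" unfolding T_set_def gTX_def gTY_def by auto
lemma P_eq: "P_set n = gP n ` {c. valid n c}" unfolding P_set_def gP_def valid_def by blast
lemma G_set_eq: "G_set n = gS ` vars n \<union> gL ` {1..n} \<union> (gTX ` {1..n} \<union> gTY ` {1..n}) \<union> gP n ` {c. valid n c}"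
  unfolding G_set_def S_eq L_eq T_eq P_eq ..


definition phi :: "mon \<Rightarrow> mon \<Rightarrow> nat \<Rightarrow> bool" where
 "phi m0 m i = (let a = Poly_Mapping.lookup m (X i) \<noteq> 0; b = Poly_Mapping.lookup m (Y i) \<noteq> 0;
     c = Poly_Mapping.lookup m (Z i) \<noteq> 0 in
   if Poly_Mapping.lookup m0 (X i) \<noteq> 0 then a else if Poly_Mapping.lookup m0 (Y i) \<noteq> 0 then b
   else if Poly_Mapping.lookup m0 (Z i) \<noteq> 0 then (a \<and> b) \<or> (\<not>a \<and> \<not>b \<and> c) else \<not>a \<and> \<not>b \<and> \<not>c)"

definition lam :: "nat \<Rightarrow> mon \<Rightarrow> mon \<Rightarrow> bit" where
 "lam n m0 m = (if \<forall>i\<in>{1..n}. phi m0 m i then 1 else 0)"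

lemma phi_cong:
  assumes "Poly_Mapping.lookup m' (X i) = 0 \<longleftrightarrow> Poly_Mapping.lookup m (X i) = 0"
    "Poly_Mapping.lookup m' (Y i) = 0 \<longleftrightarrow> Poly_Mapping.lookup m (Y i) = 0"
    "Poly_Mapping.lookup m' (Z i) = 0 \<longleftrightarrow> Poly_Mapping.lookup m (Z i) = 0"
  shows "phi m0 m' i = phi m0 m i"
  using assms unfolding phi_def Let_def by simp

lemma lam_local:
  assumes j: "j \<in> {1..n}" and oth: "\<And>i. i \<noteq> j \<Longrightarrow> phi m0 m' i = phi m0 m i"
  shows "lam n m0 m' = (if (\<forall>i\<in>{1..n}-{j}. phi m0 m i) \<and> phi m0 m' j then 1 else 0)"
proof -
  have "(\<forall>i\<in>{1..n}. phi m0 m' i) = ((\<forall>i\<in>{1..n}-{j}. phi m0 m i) \<and> phi m0 m' j)"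
  proof (intro iffI conjI ballI)
    fix i assume a: "\<forall>i\<in>{1..n}. phi m0 m' i" and "i \<in> {1..n} - {j}"
    then show "phi m0 m i" using oth[of i] by auto
  next
    assume "\<forall>i\<in>{1..n}. phi m0 m' i" then show "phi m0 m' j" using j by auto
  next
    fix i assume a: "(\<forall>i\<in>{1..n} - {j}. phi m0 m i) \<and> phi m0 m' j" and i: "i \<in> {1..n}"
    show "phi m0 m' i" proof (cases "i = j")
      case True then show ?thesis using a by simp
    next
      case False then show ?thesis using a i oth[of i] by auto
    qed
  qed
  then show ?thesis unfolding lam_def by simp
qed

lemma lk: "Poly_Mapping.lookup (m + e v) w = Poly_Mapping.lookup m w + (if v = w then 1 else 0)"
  by (simp add: lookup_add lookup_single)

lemma lk2: "Poly_Mapping.lookup (m + (e v + e u)) w = Poly_Mapping.lookup m w + (if v = w then 1 else 0) + (if u = w then 1 else 0)"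
  by (simp add: lookup_add lookup_single)

lemma bit4: "(P1 = P2) = (P3 = P4) \<Longrightarrow> (if Q \<and> P1 then 1 else 0) + (if Q \<and> P2 then 1 else 0)
  + (if Q \<and> P3 then 1 else 0) + (if Q \<and> P4 then (1::bit) else 0) = 0"
  by (cases Q; cases P1; cases P2; cases P3; cases P4) auto

lemma vanish_S: "Lam (lam n m0) (Poly_Mapping.single m 1 * gS v) = 0"
proof -
  have "lam n m0 (m + (e v + e v)) = lam n m0 (m + e v)"
  proof -
    have "\<forall>i. phi m0 (m + (e v + e v)) i = phi m0 (m + e v) i"
      by (intro allI phi_cong) (simp_all add: lookup_add lookup_single when_def)
    then show ?thesis unfolding lam_def by simp
  qed
  then show ?thesis by (simp add: gS_nf distrib_left single_mult1 Lam_add Lam_single)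
qed

lemma vanish_L: assumes j: "j \<in> {1..n}"
  shows "Lam (lam n m0) (Poly_Mapping.single m 1 * gL j) = 0"
proof -
  let ?R = "\<forall>i\<in>{1..n}-{j}. phi m0 m i"
  have 1: "lam n m0 (m + (e (X j) + e (Y j))) = (if ?R \<and> phi m0 (m + (e (X j) + e (Y j))) j then 1 else 0)"
    by (rule lam_local[OF j]) (rule phi_cong, simp_all add: lookup_add lookup_single)
  have 2: "lam n m0 (m + e (X j)) = (if ?R \<and> phi m0 (m + e (X j)) j then 1 else 0)"
    by (rule lam_local[OF j]) (rule phi_cong, simp_all add: lookup_add lookup_single)
  have 3: "lam n m0 (m + e (Y j)) = (if ?R \<and> phi m0 (m + e (Y j)) j then 1 else 0)"
    by (rule lam_local[OF j]) (rule phi_cong, simp_all add: lookup_add lookup_single)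
  have 4: "lam n m0 (m + e (Z j)) = (if ?R \<and> phi m0 (m + e (Z j)) j then 1 else 0)"
    by (rule lam_local[OF j]) (rule phi_cong, simp_all add: lookup_add lookup_single)
  have "lam n m0 (m + (e (X j) + e (Y j))) + lam n m0 (m + e (X j)) + lam n m0 (m + e (Y j)) + lam n m0 (m + e (Z j)) = 0"
  proof -
    have "(phi m0 (m + (e (X j) + e (Y j))) j = phi m0 (m + e (X j)) j) = (phi m0 (m + e (Y j)) j = phi m0 (m + e (Z j)) j)"
      by (auto simp add: phi_def Let_def lookup_add lookup_single)
    then show ?thesis unfolding 1 2 3 4 by (rule bit4)
  qed
  then show ?thesis by (simp add: gL_nf distrib_left single_mult1 Lam_add Lam_single)
qed

lemma vanish_TX: assumes j: "j \<in> {1..n}"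
  shows "Lam (lam n m0) (Poly_Mapping.single m 1 * gTX j) = 0"
proof -
  let ?R = "\<forall>i\<in>{1..n}-{j}. phi m0 m i"
  have 1: "lam n m0 (m + (e (X j) + e (Z j))) = (if ?R \<and> phi m0 (m + (e (X j) + e (Z j))) j then 1 else 0)"
    by (rule lam_local[OF j]) (rule phi_cong, simp_all add: lookup_add lookup_single)
  have 2: "lam n m0 (m + e (X j)) = (if ?R \<and> phi m0 (m + e (X j)) j then 1 else 0)"
    by (rule lam_local[OF j]) (rule phi_cong, simp_all add: lookup_add lookup_single)
  have "lam n m0 (m + (e (X j) + e (Z j))) = lam n m0 (m + e (X j))"
  proof -
    have "phi m0 (m + (e (X j) + e (Z j))) j = phi m0 (m + e (X j)) j"
      by (simp add: phi_def Let_def lookup_add lookup_single)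
    then show ?thesis unfolding 1 2 by simp
  qed
  then show ?thesis by (simp add: gTX_nf distrib_left single_mult1 Lam_add Lam_single)
qed

lemma vanish_TY: assumes j: "j \<in> {1..n}"
  shows "Lam (lam n m0) (Poly_Mapping.single m 1 * gTY j) = 0"
proof -
  let ?R = "\<forall>i\<in>{1..n}-{j}. phi m0 m i"
  have 1: "lam n m0 (m + (e (Y j) + e (Z j))) = (if ?R \<and> phi m0 (m + (e (Y j) + e (Z j))) j then 1 else 0)"
    by (rule lam_local[OF j]) (rule phi_cong, simp_all add: lookup_add lookup_single)
  have 2: "lam n m0 (m + e (Y j)) = (if ?R \<and> phi m0 (m + e (Y j)) j then 1 else 0)"
    by (rule lam_local[OF j]) (rule phi_cong, simp_all add: lookup_add lookup_single)
  have "lam n m0 (m + (e (Y j) + e (Z j))) = lam n m0 (m + e (Y j))"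
  proof -
    have "phi m0 (m + (e (Y j) + e (Z j))) j = phi m0 (m + e (Y j)) j"
      by (simp add: phi_def Let_def lookup_add lookup_single)
    then show ?thesis unfolding 1 2 by simp
  qed
  then show ?thesis by (simp add: gTY_nf distrib_left single_mult1 Lam_add Lam_single)
qed

lemma vanish_P:
  assumes c: "valid n c" and i0: "i0 \<in> {1..n}" and z: "Poly_Mapping.lookup m0 (X i0) = 0"
    "Poly_Mapping.lookup m0 (Y i0) = 0" "Poly_Mapping.lookup m0 (Z i0) = 0"
  shows "Lam (lam n m0) (Poly_Mapping.single m 1 * gP n c) = 0"
proof -
  have ci: "c i0 \<in> {X i0, Y i0, Z i0}" using c i0 unfolding valid_def by blast
  have "Poly_Mapping.lookup (M n c) (c i0) = 1" using lookup_M[OF c] i0 by auto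
  then have pos: "Poly_Mapping.lookup (m + M n c) (c i0) \<noteq> 0" by (simp add: lookup_add)
  have "\<not> phi m0 (m + M n c) i0"
    using ci pos z unfolding phi_def Let_def by auto
  then have "lam n m0 (m + M n c) = 0" using i0 unfolding lam_def by auto
  then show ?thesis by (simp add: gP_nf single_mult1 Lam_single)
qed



lemma vars_UN: "vars n = (\<Union>i\<in>{1..n}. {X i, Y i, Z i})"
  unfolding vars_def by auto

lemma finite_vars[simp]: "finite (vars n)" unfolding vars_UN by auto

lemma tdeg_rows:
  assumes "m \<in> mons n"
  shows "tdeg m = (\<Sum>i\<in>{1..n}. Poly_Mapping.lookup m (X i) + Poly_Mapping.lookup m (Y i) + Poly_Mapping.lookup m (Z i))"
proof -
  have "tdeg m = (\<Sum>v\<in>vars n. Poly_Mapping.lookup m v)"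
    using assms by (intro tdeg_superset) (auto simp: mons_def)
  also have "\<dots> = (\<Sum>i\<in>{1..n}. (\<Sum>v\<in>{X i, Y i, Z i}. Poly_Mapping.lookup m v))"
    unfolding vars_UN by (rule sum.UNION_disjoint) auto
  also have "\<dots> = (\<Sum>i\<in>{1..n}. Poly_Mapping.lookup m (X i) + Poly_Mapping.lookup m (Y i) + Poly_Mapping.lookup m (Z i))"
    by (intro sum.cong) (simp_all add: add.assoc)
  finally show ?thesis .
qed

definition std :: "nat \<Rightarrow> mon \<Rightarrow> bool" where
  "std n m0 \<longleftrightarrow> m0 \<in> mons n \<and> (\<forall>v. Poly_Mapping.lookup m0 v \<le> 1) \<and>
     (\<forall>i. \<not> (Poly_Mapping.lookup m0 (X i) \<noteq> 0 \<and> Poly_Mapping.lookup m0 (Y i) \<noteq> 0)) \<and>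
     (\<forall>i. \<not> (Poly_Mapping.lookup m0 (X i) \<noteq> 0 \<and> Poly_Mapping.lookup m0 (Z i) \<noteq> 0)) \<and>
     (\<forall>i. \<not> (Poly_Mapping.lookup m0 (Y i) \<noteq> 0 \<and> Poly_Mapping.lookup m0 (Z i) \<noteq> 0))"

lemma lam_self: assumes "std n m0" shows "lam n m0 m0 = 1"
proof -
  have "phi m0 m0 i" for i
    using assms unfolding std_def phi_def Let_def by auto
  then show ?thesis unfolding lam_def by simp
qed

lemma row:
  assumes s: "std n m0" and p: "phi m0 m i"
  defines "t \<equiv> \<lambda>m. Poly_Mapping.lookup m (X i) + Poly_Mapping.lookup m (Y i) + Poly_Mapping.lookup m (Z i)"
  shows "t m0 \<le> t m \<and> (t m0 = t m \<longrightarrow> Poly_Mapping.lookup m (X i) = Poly_Mapping.lookup m0 (X i)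
     \<and> Poly_Mapping.lookup m (Y i) = Poly_Mapping.lookup m0 (Y i) \<and> Poly_Mapping.lookup m (Z i) = Poly_Mapping.lookup m0 (Z i))"
proof -
  have b: "Poly_Mapping.lookup m0 (X i) \<le> 1" "Poly_Mapping.lookup m0 (Y i) \<le> 1" "Poly_Mapping.lookup m0 (Z i) \<le> 1"
    and ex: "\<not> (Poly_Mapping.lookup m0 (X i) \<noteq> 0 \<and> Poly_Mapping.lookup m0 (Y i) \<noteq> 0)"
      "\<not> (Poly_Mapping.lookup m0 (X i) \<noteq> 0 \<and> Poly_Mapping.lookup m0 (Z i) \<noteq> 0)"
      "\<not> (Poly_Mapping.lookup m0 (Y i) \<noteq> 0 \<and> Poly_Mapping.lookup m0 (Z i) \<noteq> 0)"
    using s unfolding std_def by blast+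
  show ?thesis using b ex p unfolding t_def phi_def Let_def
    by (auto split: if_splits)
qed

lemma delta:
  assumes s: "std n m0" and m: "m \<in> mons n" and l: "lam n m0 m = 1" and ne: "m \<noteq> m0"
  shows "tdeg m0 < tdeg m"
proof -
  let ?t = "\<lambda>m i. Poly_Mapping.lookup m (X i) + Poly_Mapping.lookup m (Y i) + Poly_Mapping.lookup m (Z i)"
  have m0: "m0 \<in> mons n" using s unfolding std_def by blast
  have p: "\<forall>i\<in>{1..n}. phi m0 m i" using l unfolding lam_def by (auto split: if_splits)
  have r: "\<forall>i\<in>{1..n}. ?t m0 i \<le> ?t m i \<and> (?t m0 i = ?t m i \<longrightarrow> Poly_Mapping.lookup m (X i) = Poly_Mapping.lookup m0 (X i)
     \<and> Poly_Mapping.lookup m (Y i) = Poly_Mapping.lookup m0 (Y i) \<and> Poly_Mapping.lookup m (Z i) = Poly_Mapping.lookup m0 (Z i))"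
  proof
    fix i assume "i \<in> {1..n}"
    then have "phi m0 m i" using p by blast
    from row[OF s this] show "?t m0 i \<le> ?t m i \<and> (?t m0 i = ?t m i \<longrightarrow> Poly_Mapping.lookup m (X i) = Poly_Mapping.lookup m0 (X i)
     \<and> Poly_Mapping.lookup m (Y i) = Poly_Mapping.lookup m0 (Y i) \<and> Poly_Mapping.lookup m (Z i) = Poly_Mapping.lookup m0 (Z i))" by simp
  qed
  have "\<exists>i\<in>{1..n}. ?t m0 i < ?t m i"
  proof (rule ccontr)
    assume "\<not> ?thesis"
    then have eq: "\<forall>i\<in>{1..n}. ?t m0 i = ?t m i" using r by (meson le_neq_implies_less)
    have "Poly_Mapping.lookup m v = Poly_Mapping.lookup m0 v" for v
    proof (cases "v \<in> vars n")
      case True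
      then obtain i where i: "i \<in> {1..n}" "v \<in> {X i, Y i, Z i}" unfolding vars_UN by blast
      have "?t m0 i = ?t m i" using eq i(1) by blast
      then have "Poly_Mapping.lookup m (X i) = Poly_Mapping.lookup m0 (X i)
        \<and> Poly_Mapping.lookup m (Y i) = Poly_Mapping.lookup m0 (Y i) \<and> Poly_Mapping.lookup m (Z i) = Poly_Mapping.lookup m0 (Z i)"
        using r i(1) by blast
      then show ?thesis using i(2) by auto
    next
      case False
      then have "v \<notin> Poly_Mapping.keys m" "v \<notin> Poly_Mapping.keys m0" using m m0 unfolding mons_def by auto
      then show ?thesis by (simp add: in_keys_iff)
    qed
    then have "m = m0" by (rule poly_mapping_eqI)
    then show False using ne by simp
  qed
  moreover have "\<forall>i\<in>{1..n}. ?t m0 i \<le> ?t m i" using r by blast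
  ultimately have "(\<Sum>i\<in>{1..n}. ?t m0 i) < (\<Sum>i\<in>{1..n}. ?t m i)"
    by (intro sum_strict_mono_ex1) auto
  then show ?thesis using tdeg_rows[OF m] tdeg_rows[OF m0] by simp
qed

lemma mons_add: "a \<in> mons n \<Longrightarrow> b \<in> mons n \<Longrightarrow> a + b \<in> mons n"
  unfolding mons_def using keys_add[of a b] by auto
lemma mons_e: "v \<in> vars n \<Longrightarrow> e v \<in> mons n" unfolding mons_def by simp
lemma mons_zero: "0 \<in> mons n" unfolding mons_def by simp
lemma mons_sum: "(\<And>a. a \<in> A \<Longrightarrow> f a \<in> mons n) \<Longrightarrow> sum f A \<in> mons n"
  by (induction A rule: infinite_finite_induct) (simp_all add: mons_zero mons_add)
lemma XYZ_vars: "i \<in> {1..n} \<Longrightarrow> X i \<in> vars n \<and> Y i \<in> vars n \<and> Z i \<in> vars n"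
  unfolding vars_def by auto
lemma M_mons: assumes "valid n c" shows "M n c \<in> mons n"
  unfolding M_def
proof (intro mons_sum mons_e)
  fix i assume i: "i \<in> {1..n}"
  then have "c i \<in> {X i, Y i, Z i}" using assms unfolding valid_def by blast
  then show "c i \<in> vars n" using XYZ_vars[OF i] by auto
qed

lemma R_add: "p \<in> R n \<Longrightarrow> q \<in> R n \<Longrightarrow> p + q \<in> R n"
  unfolding R_def using keys_add[of p q] by auto
lemma R_mult: assumes "p \<in> R n" "q \<in> R n" shows "p * q \<in> R n"
  unfolding R_def
proof (rule CollectI, rule subsetI)
  fix k assume "k \<in> Poly_Mapping.keys (p * q)"
  then obtain a b where "k = a + b" "a \<in> Poly_Mapping.keys p" "b \<in> Poly_Mapping.keys q"
    using keys_mult[of p q] by blast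
  then show "k \<in> mons n" using assms mons_add unfolding R_def by blast
qed
lemma R_zero: "0 \<in> R n" unfolding R_def by simp
lemma R_sum: "(\<And>a. a \<in> A \<Longrightarrow> f a \<in> R n) \<Longrightarrow> sum f A \<in> R n"
  by (induction A rule: infinite_finite_induct) (simp_all add: R_zero R_add)
lemma R_single: "m \<in> mons n \<Longrightarrow> Poly_Mapping.single m c \<in> R n"
  unfolding R_def by simp

lemma ideal_R: "G \<subseteq> R n \<Longrightarrow> f \<in> ideal_gen n G \<Longrightarrow> f \<in> R n"
  unfolding ideal_gen_def by (auto intro!: R_sum R_mult simp del: R_def)

context
  fixes n :: nat and ord :: "mon \<Rightarrow> mon \<Rightarrow> bool"
  assumes adm: "admissible n ord" and td: "total_degree n ord"
begin

lemma o_refl: "a \<in> mons n \<Longrightarrow> ord a a" using adm unfolding admissible_def by blast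
lemma o_antisym: "a \<in> mons n \<Longrightarrow> b \<in> mons n \<Longrightarrow> ord a b \<Longrightarrow> ord b a \<Longrightarrow> a = b"
  using adm unfolding admissible_def by blast
lemma o_trans: "a \<in> mons n \<Longrightarrow> b \<in> mons n \<Longrightarrow> c \<in> mons n \<Longrightarrow> ord a b \<Longrightarrow> ord b c \<Longrightarrow> ord a c"
  using adm unfolding admissible_def by blast
lemma o_total: "a \<in> mons n \<Longrightarrow> b \<in> mons n \<Longrightarrow> ord a b \<or> ord b a"
  using adm unfolding admissible_def by blast
lemma o_td: "a \<in> mons n \<Longrightarrow> b \<in> mons n \<Longrightarrow> tdeg a < tdeg b \<Longrightarrow> ord a b"
  using td unfolding total_degree_def by blast

lemma lm_eqI:
  assumes "Poly_Mapping.keys p \<subseteq> mons n" "m \<in> Poly_Mapping.keys p" "\<forall>m'\<in>Poly_Mapping.keys p. ord m' m"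
  shows "lm ord p = m"
  unfolding lm_def
proof (rule the_equality)
  show "m \<in> Poly_Mapping.keys p \<and> (\<forall>m'\<in>Poly_Mapping.keys p. ord m' m)" using assms by blast
next
  fix m'' assume "m'' \<in> Poly_Mapping.keys p \<and> (\<forall>m'\<in>Poly_Mapping.keys p. ord m' m'')"
  then show "m'' = m" using assms o_antisym by blast
qed

lemma max_exists:
  assumes "finite K" "K \<noteq> {}" "K \<subseteq> mons n"
  shows "\<exists>m\<in>K. \<forall>m'\<in>K. ord m' m"
  using assms
proof (induction K rule: finite_ne_induct)
  case (singleton x) then show ?case using o_refl by auto
next
  case (insert x F)
  then obtain m where m: "m \<in> F" "\<forall>m'\<in>F. ord m' m" by auto
  have x: "x \<in> mons n" and Fm: "F \<subseteq> mons n" using insert by auto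
  show ?case
  proof (cases "ord x m")
    case True then show ?thesis using m by auto
  next
    case False
    then have mx: "ord m x" using o_total x m Fm by blast
    have "\<forall>m'\<in>F. ord m' x"
    proof
      fix m' assume "m' \<in> F" then show "ord m' x" using o_trans[OF _ _ x _ mx] m Fm by blast
    qed
    then show ?thesis using o_refl x by auto
  qed
qed

lemma lm_props:
  assumes "Poly_Mapping.keys p \<subseteq> mons n" "p \<noteq> 0"
  shows "lm ord p \<in> Poly_Mapping.keys p \<and> (\<forall>m'\<in>Poly_Mapping.keys p. ord m' (lm ord p))"
proof -
  obtain m where "m \<in> Poly_Mapping.keys p" "\<forall>m'\<in>Poly_Mapping.keys p. ord m' m"
    using max_exists[of "Poly_Mapping.keys p"] assms by auto
  moreover then have "lm ord p = m" using lm_eqI assms by blast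
  ultimately show ?thesis by simp
qed

lemma lm_lead:
  assumes a: "a \<in> mons n" and q: "Poly_Mapping.keys q \<subseteq> B" and B: "\<forall>b\<in>B. b \<in> mons n \<and> tdeg b < tdeg a"
  defines "p \<equiv> Poly_Mapping.single a 1 + q"
  shows "lm ord p = a \<and> Poly_Mapping.keys p \<subseteq> insert a B \<and> Poly_Mapping.lookup p a = 1 \<and> p \<noteq> 0"
proof -
  have "a \<notin> Poly_Mapping.keys q" using q B by auto
  then have la: "Poly_Mapping.lookup p a = 1" unfolding p_def by (simp add: lookup_add in_keys_iff)
  have kp: "Poly_Mapping.keys p \<subseteq> insert a B" unfolding p_def using keys_add[of "Poly_Mapping.single a 1" q] q by auto
  have km: "Poly_Mapping.keys p \<subseteq> mons n" using kp a B by auto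
  have ak: "a \<in> Poly_Mapping.keys p" using la by (simp add: in_keys_iff)
  have "\<forall>m'\<in>Poly_Mapping.keys p. ord m' a"
  proof
    fix m' assume "m' \<in> Poly_Mapping.keys p"
    then have "m' = a \<or> m' \<in> B" using kp by auto
    then show "ord m' a" using o_refl o_td a B by auto
  qed
  then have "lm ord p = a" using lm_eqI km ak by blast
  then show ?thesis using la kp by auto
qed

end



lemma tdeg_M: "tdeg (M n c) = n" unfolding M_def by (simp add: tdeg_sum)

lemma pair_eq: "e a + e b = e a' + e b' \<Longrightarrow> (a = a' \<and> b = b') \<or> (a = b' \<and> b = a')"
proof -
  assume h: "e a + e b = e a' + e b'"
  have l: "\<And>w. Poly_Mapping.lookup (e a + e b) w = Poly_Mapping.lookup (e a' + e b') w" using h by simp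
  show ?thesis using l[of a] l[of b] l[of a'] l[of b'] by (auto simp: lookup_add lookup_single when_def split: if_splits)
qed

lemma dv_M_idx:
  assumes n: "n \<ge> 2" and c: "valid n c" and d: "mdvd (M n c) a" and a: "\<forall>w. Poly_Mapping.lookup a w \<noteq> 0 \<longrightarrow> idx w = j"
  shows False
proof -
  have "\<forall>i\<in>{1..n}. idx (c i) = j"
  proof
    fix i assume i: "i \<in> {1..n}"
    have "Poly_Mapping.lookup (M n c) (c i) = 1" using lookup_M[OF c] i by auto
    then have "Poly_Mapping.lookup a (c i) \<noteq> 0" using d unfolding mdvd_def by (metis not_one_le_zero)
    then show "idx (c i) = j" using a by blast
  qed
  then have "1 = j" "2 = j" using valid_idx[OF c] n by auto
  then show False by simp
qed

lemma dv_pair_M: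
  assumes c: "valid n c" and d: "mdvd (e a + e b) (M n c)" and ab: "idx a = idx b"
  shows False
proof -
  have la: "Poly_Mapping.lookup (e a + e b) a \<le> Poly_Mapping.lookup (M n c) a"
   and lb: "Poly_Mapping.lookup (e a + e b) b \<le> Poly_Mapping.lookup (M n c) b" using d unfolding mdvd_def by auto
  show False
  proof (cases "a = b")
    case True
    then show False using la lookup_M[OF c, of a] by (simp add: lookup_add split: if_splits)
  next
    case False
    then obtain i k where i: "i \<in> {1..n}" "c i = a" and k: "k \<in> {1..n}" "c k = b"
      using la lb lookup_M[OF c, of a] lookup_M[OF c, of b] by (auto simp: lookup_add lookup_single split: if_splits)
    then have "i = k" using valid_idx[OF c] ab by metis
    then show False using i k False by simp
  qed
qed

lemma dv_MM:
  assumes c: "valid n c" and c': "valid n c'" and d: "mdvd (M n c') (M n c)"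
  shows "gP n c' = gP n c"
proof -
  have "c' i = c i" if i: "i \<in> {1..n}" for i
  proof -
    have "Poly_Mapping.lookup (M n c') (c' i) = 1" using lookup_M[OF c'] i by auto
    then have "Poly_Mapping.lookup (M n c) (c' i) \<noteq> 0" using d unfolding mdvd_def by (metis not_one_le_zero)
    then obtain k where k: "k \<in> {1..n}" "c k = c' i" using lookup_M[OF c] by (auto split: if_splits)
    then have "k = i" using valid_idx[OF c] valid_idx[OF c'] i by metis
    then show ?thesis using k by simp
  qed
  then show ?thesis unfolding gP_def by (intro prod.cong) auto
qed

lemma dv_two: "mdvd (e a + e b) (e a' + e b') \<Longrightarrow> (a = a' \<and> b = b') \<or> (a = b' \<and> b = a')"
  by (rule pair_eq, rule mdvd_tdeg_eq) (simp_all add: tdeg_add)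



lemma dvP1: "valid n c \<Longrightarrow> idx a = idx b \<Longrightarrow> \<not> mdvd (e a + e b) (M n c)"
  using dv_pair_M by blast

lemma dvP2: assumes "n \<ge> 2" "valid n c" "idx a = idx b" shows "\<not> mdvd (M n c) (e a + e b)"
proof
  assume d: "mdvd (M n c) (e a + e b)"
  have "\<forall>w. Poly_Mapping.lookup (e a + e b) w \<noteq> 0 \<longrightarrow> idx w = idx a"
    using assms(3) by (auto simp: lookup_add lookup_single when_def split: if_splits)
  then show False using dv_M_idx[OF assms(1,2) d] by blast
qed

lemma tdeg_pair: "tdeg (e a + e b) = 2" by (simp add: tdeg_add)

context
  fixes n :: nat and ord :: "mon \<Rightarrow> mon \<Rightarrow> bool"
  assumes adm: "admissible n ord" and td: "total_degree n ord" and n2: "n \<ge> 2"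
begin

lemma gen_S: assumes v: "v \<in> vars n"
  shows "lm ord (gS v) = e v + e v \<and> Poly_Mapping.keys (gS v) \<subseteq> {e v + e v, e v}
    \<and> Poly_Mapping.lookup (gS v) (e v + e v) = 1 \<and> gS v \<noteq> 0"
  unfolding gS_nf
  using lm_lead[OF adm td, of "e v + e v" "Poly_Mapping.single (e v) 1" "{e v}"]
  using mons_e[OF v] mons_add[OF mons_e[OF v] mons_e[OF v]] by (simp add: tdeg_add)

lemma gen_L: assumes i: "i \<in> {1..n}"
  shows "lm ord (gL i) = e (X i) + e (Y i) \<and> Poly_Mapping.keys (gL i) \<subseteq> {e (X i) + e (Y i), e (X i), e (Y i), e (Z i)}
    \<and> Poly_Mapping.lookup (gL i) (e (X i) + e (Y i)) = 1 \<and> gL i \<noteq> 0"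
proof -
  have eq: "gL i = Poly_Mapping.single (e (X i) + e (Y i)) 1 + (Poly_Mapping.single (e (X i)) 1
   + Poly_Mapping.single (e (Y i)) 1 + Poly_Mapping.single (e (Z i)) 1)"
    unfolding gL_nf by (simp add: add.assoc)
  have k: "Poly_Mapping.keys (Poly_Mapping.single (e (X i)) (1::bit) + Poly_Mapping.single (e (Y i)) 1 + Poly_Mapping.single (e (Z i)) 1)
     \<subseteq> {e (X i), e (Y i), e (Z i)}"
    using keys_add[of "Poly_Mapping.single (e (X i)) (1::bit) + Poly_Mapping.single (e (Y i)) 1" "Poly_Mapping.single (e (Z i)) 1"]
      keys_add[of "Poly_Mapping.single (e (X i)) (1::bit)" "Poly_Mapping.single (e (Y i)) 1"] by auto
  have x: "X i \<in> vars n" "Y i \<in> vars n" "Z i \<in> vars n" using XYZ_vars[OF i] by auto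
  show ?thesis unfolding eq
    using lm_lead[OF adm td, of "e (X i) + e (Y i)" _ "{e (X i), e (Y i), e (Z i)}", OF _ k]
    using mons_e[OF x(1)] mons_e[OF x(2)] mons_e[OF x(3)] mons_add[OF mons_e[OF x(1)] mons_e[OF x(2)]] by (simp add: tdeg_add)
qed

lemma gen_TX: assumes i: "i \<in> {1..n}"
  shows "lm ord (gTX i) = e (X i) + e (Z i) \<and> Poly_Mapping.keys (gTX i) \<subseteq> {e (X i) + e (Z i), e (X i)}
    \<and> Poly_Mapping.lookup (gTX i) (e (X i) + e (Z i)) = 1 \<and> gTX i \<noteq> 0"
proof -
  have x: "X i \<in> vars n" "Y i \<in> vars n" "Z i \<in> vars n" using XYZ_vars[OF i] by auto
  show ?thesis unfolding gTX_nf
    using lm_lead[OF adm td, of "e (X i) + e (Z i)" "Poly_Mapping.single (e (X i)) 1" "{e (X i)}"]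
    using mons_e[OF x(1)] mons_e[OF x(3)] mons_add[OF mons_e[OF x(1)] mons_e[OF x(3)]] by (simp add: tdeg_add)
qed

lemma gen_TY: assumes i: "i \<in> {1..n}"
  shows "lm ord (gTY i) = e (Y i) + e (Z i) \<and> Poly_Mapping.keys (gTY i) \<subseteq> {e (Y i) + e (Z i), e (Y i)}
    \<and> Poly_Mapping.lookup (gTY i) (e (Y i) + e (Z i)) = 1 \<and> gTY i \<noteq> 0"
proof -
  have x: "X i \<in> vars n" "Y i \<in> vars n" "Z i \<in> vars n" using XYZ_vars[OF i] by auto
  show ?thesis unfolding gTY_nf
    using lm_lead[OF adm td, of "e (Y i) + e (Z i)" "Poly_Mapping.single (e (Y i)) 1" "{e (Y i)}"]
    using mons_e[OF x(2)] mons_e[OF x(3)] mons_add[OF mons_e[OF x(2)] mons_e[OF x(3)]] by (simp add: tdeg_add)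
qed

lemma gen_P: assumes c: "valid n c"
  shows "lm ord (gP n c) = M n c \<and> Poly_Mapping.keys (gP n c) \<subseteq> {M n c}
    \<and> Poly_Mapping.lookup (gP n c) (M n c) = 1 \<and> gP n c \<noteq> 0"
  unfolding gP_nf
  using lm_lead[OF adm td, of "M n c" 0 "{}"] M_mons[OF c] by simp

end



lemma mdvd_pair1: "a \<noteq> b \<Longrightarrow> Poly_Mapping.lookup m0 a \<noteq> 0 \<Longrightarrow> Poly_Mapping.lookup m0 b \<noteq> 0 \<Longrightarrow> mdvd (e a + e b) m0"
  unfolding mdvd_def by (auto simp: lookup_add lookup_single when_def)

lemma mdvd_pair2: "Poly_Mapping.lookup m0 a \<ge> 2 \<Longrightarrow> mdvd (e a + e a) m0"
  unfolding mdvd_def by (auto simp: lookup_add lookup_single when_def)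

lemma X_vars: "X i \<in> vars n \<Longrightarrow> i \<in> {1..n}" unfolding vars_def by auto
lemma Y_vars: "Y i \<in> vars n \<Longrightarrow> i \<in> {1..n}" unfolding vars_def by auto
lemma Z_vars: "Z i \<in> vars n \<Longrightarrow> i \<in> {1..n}" unfolding vars_def by auto

lemma finite_G: "finite (G_set n)"
proof -
  have "gP n ` {c. valid n c} \<subseteq> gP n ` (\<Pi>\<^sub>E i \<in> {1..n}. {X i, Y i, Z i})"
  proof
    fix p assume "p \<in> gP n ` {c. valid n c}"
    then obtain c where c: "valid n c" "p = gP n c" by blast
    have "gP n c = gP n (restrict c {1..n})" unfolding gP_def by (intro prod.cong) auto
    moreover have "restrict c {1..n} \<in> (\<Pi>\<^sub>E i \<in> {1..n}. {X i, Y i, Z i})"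
      using c(1) unfolding valid_def restrict_PiE_iff by blast
    ultimately show "p \<in> gP n ` (\<Pi>\<^sub>E i \<in> {1..n}. {X i, Y i, Z i})" using c by blast
  qed
  moreover have "finite (gP n ` (\<Pi>\<^sub>E i \<in> {1..n}. {X i, Y i, Z i}))" by (intro finite_imageI finite_PiE) auto
  ultimately have "finite (gP n ` {c. valid n c})" by (rule finite_subset)
  then show ?thesis unfolding G_set_eq by simp
qed

context
  fixes n :: nat and ord :: "mon \<Rightarrow> mon \<Rightarrow> bool"
  assumes adm: "admissible n ord" and td: "total_degree n ord" and n2: "n \<ge> 2"
begin

lemma G_cases: "g \<in> G_set n \<Longrightarrow>
  (\<exists>v\<in>vars n. g = gS v) \<or> (\<exists>i\<in>{1..n}. g = gL i) \<or> (\<exists>i\<in>{1..n}. g = gTX i) \<or> (\<exists>i\<in>{1..n}. g = gTY i) \<or> (\<exists>c. valid n c \<and> g = gP n c)"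
  unfolding G_set_eq by blast

lemma G_info:
  assumes g: "g \<in> G_set n"
  shows "g \<noteq> 0 \<and> Poly_Mapping.lookup g (lm ord g) = 1 \<and> Poly_Mapping.keys g \<subseteq> mons n \<and> 2 \<le> tdeg (lm ord g)
     \<and> (\<forall>m\<in>Poly_Mapping.keys g. m \<noteq> lm ord g \<longrightarrow> tdeg m = 1)"
  using G_cases[OF g]
proof (elim disjE bexE exE conjE)
  fix v assume v: "v \<in> vars n" and "g = gS v"
  then show ?thesis using gen_S[OF adm td n2 v] mons_e[OF v] mons_add[OF mons_e[OF v] mons_e[OF v]]
    by (auto simp: tdeg_add)
next
  fix i assume i: "i \<in> {1..n}" and "g = gL i"
  have x: "X i \<in> vars n" "Y i \<in> vars n" "Z i \<in> vars n" using XYZ_vars[OF i] by auto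
  show ?thesis using \<open>g = gL i\<close> gen_L[OF adm td n2 i] mons_e[OF x(1)] mons_e[OF x(2)] mons_e[OF x(3)]
     mons_add[OF mons_e[OF x(1)] mons_e[OF x(2)]] by (auto simp: tdeg_add)
next
  fix i assume i: "i \<in> {1..n}" and "g = gTX i"
  have x: "X i \<in> vars n" "Y i \<in> vars n" "Z i \<in> vars n" using XYZ_vars[OF i] by auto
  show ?thesis using \<open>g = gTX i\<close> gen_TX[OF adm td n2 i] mons_e[OF x(1)] mons_e[OF x(3)]
     mons_add[OF mons_e[OF x(1)] mons_e[OF x(3)]] by (auto simp: tdeg_add)
next
  fix i assume i: "i \<in> {1..n}" and "g = gTY i"
  have x: "X i \<in> vars n" "Y i \<in> vars n" "Z i \<in> vars n" using XYZ_vars[OF i] by auto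
  show ?thesis using \<open>g = gTY i\<close> gen_TY[OF adm td n2 i] mons_e[OF x(2)] mons_e[OF x(3)]
     mons_add[OF mons_e[OF x(2)] mons_e[OF x(3)]] by (auto simp: tdeg_add)
next
  fix c assume c: "valid n c" and "g = gP n c"
  then show ?thesis using gen_P[OF adm td n2 c] M_mons[OF c] n2 by (auto simp: tdeg_M)
qed

lemma G_lm: "g \<in> G_set n \<Longrightarrow>
  (\<exists>a b. idx a = idx b \<and> lm ord g = e a + e b) \<or> (\<exists>c. valid n c \<and> g = gP n c \<and> lm ord g = M n c)"
  apply (drule G_cases)
  apply (elim disjE bexE exE conjE)
  using gen_S[OF adm td n2] gen_L[OF adm td n2] gen_TX[OF adm td n2] gen_TY[OF adm td n2] gen_P[OF adm td n2]
  apply (auto intro: exI[of _ "X _"] )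
     apply (metis idx.simps)+
  done

lemma anti: assumes g: "g \<in> G_set n" and g': "g' \<in> G_set n" and d: "mdvd (lm ord g') (lm ord g)"
  shows "g' = g"
  using G_cases[OF g] G_cases[OF g'] d
  apply (elim disjE bexE exE conjE)
  apply (simp_all add: gen_S[OF adm td n2] gen_L[OF adm td n2] gen_TX[OF adm td n2] gen_TY[OF adm td n2] gen_P[OF adm td n2]
     dvP1[simplified] dvP2[simplified] n2 dv_MM)
  apply (auto dest!: dv_two[simplified])
  done

end



context
  fixes n :: nat and ord :: "mon \<Rightarrow> mon \<Rightarrow> bool"
  assumes adm: "admissible n ord" and td: "total_degree n ord" and n2: "n \<ge> 2"
begin

lemma G_R: "G_set n \<subseteq> R n" using G_info[OF adm td n2] unfolding R_def by blast

lemma reduced_part: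
  assumes g: "g \<in> G_set n" and g': "g' \<in> G_set n" and ne: "g' \<noteq> g" and m: "m \<in> Poly_Mapping.keys g"
  shows "\<not> mdvd (lm ord g') m"
proof
  assume d: "mdvd (lm ord g') m"
  show False
  proof (cases "m = lm ord g")
    case True then show False using anti[OF adm td n2 g g'] d ne by simp
  next
    case False
    then have "tdeg m = 1" using G_info[OF adm td n2 g] m by blast
    moreover have "2 \<le> tdeg (lm ord g')" using G_info[OF adm td n2 g'] by blast
    ultimately show False using mdvd_tdeg[OF d] by simp
  qed
qed

lemma GB_part:
  assumes f: "f \<in> ideal_gen n (G_set n)" and f0: "f \<noteq> 0"
  shows "\<exists>g\<in>G_set n. g \<noteq> 0 \<and> mdvd (lm ord g) (lm ord f)"
proof (rule ccontr)
  assume nd0: "\<not> ?thesis"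
  define m0 where "m0 = lm ord f"
  have nd: "\<And>g. g \<in> G_set n \<Longrightarrow> \<not> mdvd (lm ord g) m0"
    using nd0 G_info[OF adm td n2] unfolding m0_def by blast
  have fR: "Poly_Mapping.keys f \<subseteq> mons n" using ideal_R[OF G_R f] unfolding R_def by blast
  have m0k: "m0 \<in> Poly_Mapping.keys f" and m0max: "\<forall>m'\<in>Poly_Mapping.keys f. ord m' m0"
    using lm_props[OF adm td fR f0] unfolding m0_def by auto
  have m0m: "m0 \<in> mons n" using m0k fR by blast
  have kv: "\<And>v. Poly_Mapping.lookup m0 v \<noteq> 0 \<Longrightarrow> v \<in> vars n"
    using m0m unfolding mons_def by (auto simp: in_keys_iff)
  have b1: "Poly_Mapping.lookup m0 v \<le> 1" for v
  proof (rule ccontr)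
    assume "\<not> ?thesis"
    then have 2: "Poly_Mapping.lookup m0 v \<ge> 2" by simp
    then have v: "v \<in> vars n" using kv by force
    have "gS v \<in> G_set n" unfolding G_set_eq using v by blast
    moreover have "mdvd (lm ord (gS v)) m0" using gen_S[OF adm td n2 v] mdvd_pair2[OF 2] by simp
    ultimately show False using nd by blast
  qed
  have pXY: "\<not> (Poly_Mapping.lookup m0 (X i) \<noteq> 0 \<and> Poly_Mapping.lookup m0 (Y i) \<noteq> 0)" for i
  proof
    assume h: "Poly_Mapping.lookup m0 (X i) \<noteq> 0 \<and> Poly_Mapping.lookup m0 (Y i) \<noteq> 0"
    then have i: "i \<in> {1..n}" using kv X_vars by blast
    have "gL i \<in> G_set n" unfolding G_set_eq using i by blast
    moreover have "mdvd (lm ord (gL i)) m0" using gen_L[OF adm td n2 i] mdvd_pair1[of "X i" "Y i" m0] h by simp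
    ultimately show False using nd by blast
  qed
  have pXZ: "\<not> (Poly_Mapping.lookup m0 (X i) \<noteq> 0 \<and> Poly_Mapping.lookup m0 (Z i) \<noteq> 0)" for i
  proof
    assume h: "Poly_Mapping.lookup m0 (X i) \<noteq> 0 \<and> Poly_Mapping.lookup m0 (Z i) \<noteq> 0"
    then have i: "i \<in> {1..n}" using kv X_vars by blast
    have "gTX i \<in> G_set n" unfolding G_set_eq using i by blast
    moreover have "mdvd (lm ord (gTX i)) m0" using gen_TX[OF adm td n2 i] mdvd_pair1[of "X i" "Z i" m0] h by simp
    ultimately show False using nd by blast
  qed
  have pYZ: "\<not> (Poly_Mapping.lookup m0 (Y i) \<noteq> 0 \<and> Poly_Mapping.lookup m0 (Z i) \<noteq> 0)" for i
  proof
    assume h: "Poly_Mapping.lookup m0 (Y i) \<noteq> 0 \<and> Poly_Mapping.lookup m0 (Z i) \<noteq> 0"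
    then have i: "i \<in> {1..n}" using kv Y_vars by blast
    have "gTY i \<in> G_set n" unfolding G_set_eq using i by blast
    moreover have "mdvd (lm ord (gTY i)) m0" using gen_TY[OF adm td n2 i] mdvd_pair1[of "Y i" "Z i" m0] h by simp
    ultimately show False using nd by blast
  qed
  have s: "std n m0" unfolding std_def using m0m b1 pXY pXZ pYZ by blast
  have "\<exists>i0\<in>{1..n}. Poly_Mapping.lookup m0 (X i0) = 0 \<and> Poly_Mapping.lookup m0 (Y i0) = 0 \<and> Poly_Mapping.lookup m0 (Z i0) = 0"
  proof (rule ccontr)
    assume "\<not> ?thesis"
    then have full: "\<forall>i\<in>{1..n}. Poly_Mapping.lookup m0 (X i) \<noteq> 0 \<or> Poly_Mapping.lookup m0 (Y i) \<noteq> 0 \<or> Poly_Mapping.lookup m0 (Z i) \<noteq> 0"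
      by auto
    define c where "c i = (if Poly_Mapping.lookup m0 (X i) \<noteq> 0 then X i else if Poly_Mapping.lookup m0 (Y i) \<noteq> 0 then Y i else Z i)" for i
    have c: "valid n c" unfolding valid_def c_def by auto
    have cnz: "\<forall>i\<in>{1..n}. Poly_Mapping.lookup m0 (c i) \<noteq> 0" using full unfolding c_def by auto
    have "mdvd (M n c) m0" unfolding mdvd_def
    proof
      fix w show "Poly_Mapping.lookup (M n c) w \<le> Poly_Mapping.lookup m0 w"
        using lookup_M[OF c, of w] cnz by (auto split: if_splits)
    qed
    moreover have "gP n c \<in> G_set n" unfolding G_set_eq using c by blast
    ultimately show False using nd gen_P[OF adm td n2 c] by metis
  qed
  then obtain i0 where i0: "i0 \<in> {1..n}" "Poly_Mapping.lookup m0 (X i0) = 0" "Poly_Mapping.lookup m0 (Y i0) = 0"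
    "Poly_Mapping.lookup m0 (Z i0) = 0" by blast
  have van: "Lam (lam n m0) f = 0"
  proof (rule Lam_ideal[OF _ f])
    fix g m assume g: "g \<in> G_set n"
    show "Lam (lam n m0) (Poly_Mapping.single m 1 * g) = 0"
      using G_cases[OF adm td n2 g]
    proof (elim disjE bexE exE conjE)
      fix v assume "g = gS v" then show ?thesis by (simp add: vanish_S)
    next
      fix i assume "i \<in> {1..n}" "g = gL i" then show ?thesis by (simp add: vanish_L)
    next
      fix i assume "i \<in> {1..n}" "g = gTX i" then show ?thesis by (simp add: vanish_TX)
    next
      fix i assume "i \<in> {1..n}" "g = gTY i" then show ?thesis by (simp add: vanish_TY)
    next
      fix c assume "valid n c" "g = gP n c" then show ?thesis using vanish_P[OF _ i0] by simp
    qed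
  qed
  have rest: "Poly_Mapping.lookup f m * lam n m0 m = 0" if m: "m \<in> Poly_Mapping.keys f - {m0}" for m
  proof -
    have "lam n m0 m = 0"
    proof (rule ccontr)
      assume "lam n m0 m \<noteq> 0"
      then have l1: "lam n m0 m = 1" by simp
      have mm: "m \<in> mons n" using m fR by blast
      have "tdeg m0 < tdeg m" using delta[OF s mm l1] m by blast
      then have "ord m0 m" using o_td[OF adm td m0m mm] by blast
      moreover have "ord m m0" using m m0max by blast
      ultimately have "m = m0" using o_antisym[OF adm td mm m0m] by blast
      then show False using m by blast
    qed
    then show ?thesis by simp
  qed
  have "Lam (lam n m0) f = Poly_Mapping.lookup f m0 * lam n m0 m0 + (\<Sum>m\<in>Poly_Mapping.keys f - {m0}. Poly_Mapping.lookup f m * lam n m0 m)"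
    unfolding Lam_def by (rule sum.remove[OF finite_keys m0k])
  also have "(\<Sum>m\<in>Poly_Mapping.keys f - {m0}. Poly_Mapping.lookup f m * lam n m0 m) = 0"
    by (rule sum.neutral) (use rest in blast)
  also have "Poly_Mapping.lookup f m0 * lam n m0 m0 + 0 = Poly_Mapping.lookup f m0 * lam n m0 m0" by simp
  also have "\<dots> = 1" using lam_self[OF s] m0k by (simp add: in_keys_iff)
  finally show False using van by simp
qed

end

theorem lemma2:
  fixes n :: nat and ord :: "mon \<Rightarrow> mon \<Rightarrow> bool"
  assumes "n > 1"
    and "admissible n ord"
    and "total_degree n ord"
  shows "reduced_groebner_basis n ord (G_set n) (ideal_gen n (G_set n))"
proof -
  have n2: "n \<ge> 2" using assms(1) by simp
  note adm = assms(2) and td = assms(3)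
  have sub: "G_set n \<subseteq> ideal_gen n (G_set n)"
  proof
    fix g assume g: "g \<in> G_set n"
    have "g = (\<Sum>g'\<in>{g}. 1 * g')" by simp
    moreover have "(1::pol) \<in> R n" using R_single[OF mons_zero[of n], of "1::bit"] by simp
    ultimately show "g \<in> ideal_gen n (G_set n)" unfolding ideal_gen_def using g
      by (intro CollectI exI[of _ "{g}"] exI[of _ "\<lambda>_. 1"]) auto
  qed
  show ?thesis
    unfolding reduced_groebner_basis_def groebner_basis_def lc_def
    using finite_G sub GB_part[OF adm td n2] G_info[OF adm td n2] reduced_part[OF adm td n2]
    by blast
qed


end
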